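(* Let $(X,\mathcal{F})$ be a Subset Avoider-Enforcer game and let $a,b\in X$ be distinct vertices with $L(a)\prec L(b)$. If a player (Avoider or Enforcer) has a winning strategy in this game, then she also has a winning strategy in which she always prefers claiming $a$ over claiming $b$, i.e. a winning strategy which, whenever it is her turn and both $a$ and $b$ are unclaimed, never claims $b$.
   Context: A Subset Avoider-Enforcer game $(X,\mathcal{F})$ consists of a finite board $X$ and a family $\mathcal{F}$ of pairs $(f,i_f)$ with $f\subseteq X$ and $i_f\in\mathbb{N}$. Avoider and Enforcer alternately claim one previously unclaimed element of $X$ per move (either player may be designated to start) until all of $X$ is claimed. Avoider loses (Enforcer wins) if for some $(f,i_f)\in\mathcal{F}$ she has claimed at least $i_f$ elements of $f$; otherwise Avoider wins. (An ordinary Avoider-Enforcer game with losing sets $\mathcal{F}'$ corresponds to taking pairs $(f,|f|)$ for $f\in\mathcal{F}'$.) For $v\in X$ let $L(v)=\{(f,i_f)\in\mathcal{F} : v\in f\}$. We write $L(a)\prec L(b)$ if for every $(f,i_f)\in L(a)$ there is $(g,i_g)\in L(b)$ with $g\subseteq f$ and $i_g\le i_f$. *)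

theory Defs
  imports Main
begin

datatype player = Avoider | Enforcer

fun opp :: "player \<Rightarrow> player" where
  "opp Avoider = Enforcer" | "opp Enforcer = Avoider"

text \<open>A history is the list of elements claimed so far, in order. The player
  who starts is s; players alternate.\<close>
definition turn :: "player \<Rightarrow> 'a list \<Rightarrow> player" where
  "turn s h = (if even (length h) then s else opp s)"

definition legal_hist :: "'a set \<Rightarrow> 'a list \<Rightarrow> bool" where
  "legal_hist X h \<longleftrightarrow> distinct h \<and> set h \<subseteq> X"

definition consistent ::
  "'a set \<Rightarrow> player \<Rightarrow> player \<Rightarrow> ('a list \<Rightarrow> 'a) \<Rightarrow> 'a list \<Rightarrow> bool" where
  "consistent X s p \<sigma> h \<longleftrightarrow> legal_hist X h \<and>
     (\<forall>k < length h. turn s (take k h) = p \<longrightarrow> h ! k = \<sigma> (take k h))"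

definition avoider_set :: "player \<Rightarrow> 'a list \<Rightarrow> 'a set" where
  "avoider_set s h = {h ! k | k. k < length h \<and> turn s (take k h) = Avoider}"

definition avoider_wins :: "('a set \<times> nat) set \<Rightarrow> 'a set \<Rightarrow> bool" where
  "avoider_wins F A \<longleftrightarrow> \<not> (\<exists>(f, i) \<in> F. card (A \<inter> f) \<ge> i)"

definition wins :: "('a set \<times> nat) set \<Rightarrow> player \<Rightarrow> player \<Rightarrow> 'a list \<Rightarrow> bool" where
  "wins F s p h \<longleftrightarrow> (case p of
      Avoider \<Rightarrow> avoider_wins F (avoider_set s h)
    | Enforcer \<Rightarrow> \<not> avoider_wins F (avoider_set s h))"

definition winning_strategy ::
  "'a set \<Rightarrow> ('a set \<times> nat) set \<Rightarrow> player \<Rightarrow> player \<Rightarrow> ('a list \<Rightarrow> 'a) \<Rightarrow> bool" where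
  "winning_strategy X F s p \<sigma> \<longleftrightarrow>
     (\<forall>h. consistent X s p \<sigma> h \<and> set h \<noteq> X \<and> turn s h = p \<longrightarrow> \<sigma> h \<in> X - set h) \<and>
     (\<forall>h. consistent X s p \<sigma> h \<and> set h = X \<longrightarrow> wins F s p h)"

definition prefers :: "'a set \<Rightarrow> player \<Rightarrow> player \<Rightarrow> ('a list \<Rightarrow> 'a) \<Rightarrow> 'a \<Rightarrow> 'a \<Rightarrow> bool" where
  "prefers X s p \<sigma> a b \<longleftrightarrow>
     (\<forall>h. consistent X s p \<sigma> h \<and> turn s h = p \<and> a \<notin> set h \<and> b \<notin> set h \<longrightarrow> \<sigma> h \<noteq> b)"

definition L :: "('a set \<times> nat) set \<Rightarrow> 'a \<Rightarrow> ('a set \<times> nat) set" where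
  "L F v = {(f, i) \<in> F. v \<in> f}"

definition prec :: "('a set \<times> nat) set \<Rightarrow> ('a set \<times> nat) set \<Rightarrow> bool" where
  "prec La Lb \<longleftrightarrow> (\<forall>(f, i) \<in> La. \<exists>(g, j) \<in> Lb. g \<subseteq> f \<and> j \<le> i)"

end

theory Submission
  imports Defs
begin

definition sw :: "'a \<Rightarrow> 'a \<Rightarrow> 'a \<Rightarrow> 'a" where
  "sw a b x = (if x = a then b else if x = b then a else x)"

lemma sw_sw[simp]: "sw a b (sw a b x) = x"
  by (auto simp: sw_def)

lemma inj_sw: "inj (sw a b)"
  by (metis injI sw_sw)

lemma sw_a[simp]: "sw a b a = b" and sw_b[simp]: "sw a b b = a"
  by (auto simp: sw_def)

lemma map_sw_id: "a \<notin> set h \<Longrightarrow> b \<notin> set h \<Longrightarrow> map (sw a b) h = h"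
  by (induction h) (auto simp: sw_def)

lemma turn_len: "length x = length y \<Longrightarrow> turn s x = turn s y"
  by (simp add: turn_def)

definition trig :: "player \<Rightarrow> player \<Rightarrow> ('a list \<Rightarrow> 'a) \<Rightarrow> 'a \<Rightarrow> 'a \<Rightarrow> 'a list \<Rightarrow> bool" where
  "trig s p \<sigma> a b h \<longleftrightarrow> (\<exists>k<length h. turn s (take k h) = p \<and> a \<notin> set (take k h)
      \<and> b \<notin> set (take k h) \<and> h ! k = a \<and> \<sigma> (take k h) = b)"

definition sig' :: "player \<Rightarrow> player \<Rightarrow> ('a list \<Rightarrow> 'a) \<Rightarrow> 'a \<Rightarrow> 'a \<Rightarrow> 'a list \<Rightarrow> 'a" where
  "sig' s p \<sigma> a b h = (if trig s p \<sigma> a b h \<or> (a \<notin> set h \<and> b \<notin> set h \<and> \<sigma> h = b)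
     then sw a b (\<sigma> (map (sw a b) h)) else \<sigma> h)"

definition sim :: "player \<Rightarrow> player \<Rightarrow> ('a list \<Rightarrow> 'a) \<Rightarrow> 'a \<Rightarrow> 'a \<Rightarrow> 'a list \<Rightarrow> 'a list" where
  "sim s p \<sigma> a b h = (if trig s p \<sigma> a b h then map (sw a b) h else h)"

lemma trig_take:
  assumes "trig s p \<sigma> a b h" "distinct h"
  obtains t where "t < length h" "turn s (take t h) = p" "a \<notin> set (take t h)"
      "b \<notin> set (take t h)" "h ! t = a" "\<sigma> (take t h) = b"
    "\<And>k. k \<le> t \<Longrightarrow> \<not> trig s p \<sigma> a b (take k h)"
    "\<And>k. t < k \<Longrightarrow> trig s p \<sigma> a b (take k h)"
proof -
  from assms obtain t where t: "t < length h" "turn s (take t h) = p" "a \<notin> set (take t h)"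
      "b \<notin> set (take t h)" "h ! t = a" "\<sigma> (take t h) = b"
    unfolding trig_def by blast
  have "\<not> trig s p \<sigma> a b (take k h)" if "k \<le> t" for k
  proof
    assume "trig s p \<sigma> a b (take k h)"
    then obtain j where "j < length (take k h)" "take k h ! j = a" unfolding trig_def by blast
    then have "j < t" "h ! j = a" using that by auto
    then have "a \<in> set (take t h)" using t(1)
      by (metis in_set_conv_nth length_take min.absorb4 nth_take order.strict_trans)
    with t(3) show False by simp
  qed
  moreover have "trig s p \<sigma> a b (take k h)" if "t < k" for k
    unfolding trig_def
    apply (rule exI[of _ t])
    using t that by (auto simp: min_def)
  ultimately show ?thesis using t that by blast
qed

lemma sim_consistent:
  assumes c: "consistent X s p (sig' s p \<sigma> a b) h" and X: "a \<in> X" "b \<in> X"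
  shows "consistent X s p \<sigma> (sim s p \<sigma> a b h)"
proof -
  have lh: "legal_hist X h" and hk: "\<And>k. k < length h \<Longrightarrow> turn s (take k h) = p \<Longrightarrow>
      h ! k = sig' s p \<sigma> a b (take k h)"
    using c unfolding consistent_def by auto
  have dist: "distinct h" using lh by (simp add: legal_hist_def)
  have legal: "legal_hist X (map (sw a b) h)"
    using lh X unfolding legal_hist_def
    by (auto simp: distinct_map inj_on_def sw_def dest: inj_onD[OF inj_sw])
  show ?thesis
  proof (cases "trig s p \<sigma> a b h")
    case True
    then obtain t where t: "t < length h" "turn s (take t h) = p" "a \<notin> set (take t h)"
      "b \<notin> set (take t h)" "h ! t = a" "\<sigma> (take t h) = b"
      and nt: "\<And>k. k \<le> t \<Longrightarrow> \<not> trig s p \<sigma> a b (take k h)"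
      and yt: "\<And>k. t < k \<Longrightarrow> trig s p \<sigma> a b (take k h)"
      by (rule trig_take[OF _ dist]) (rule that; blast)
    have "map (sw a b) h ! k = \<sigma> (take k (map (sw a b) h))"
      if k: "k < length h" "turn s (take k h) = p" for k
    proof -
      consider "k < t" | "k = t" | "t < k" by linarith
      then show ?thesis
      proof cases
        case 1
        have sub: "set (take k h) \<subseteq> set (take t h)"
          using 1 by (simp add: set_take_subset_set_take)
        have ab: "a \<notin> set (take k h)" "b \<notin> set (take k h)" using sub t by auto
        have hkin: "h ! k \<in> set (take t h)" using 1 t(1)
          by (metis in_set_conv_nth length_take min.absorb4 nth_take order.strict_trans)
        have "h ! k = sig' s p \<sigma> a b (take k h)" using hk k by blast
        moreover have "sig' s p \<sigma> a b (take k h) = \<sigma> (take k h)"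
        proof -
          have "\<not> trig s p \<sigma> a b (take k h)" using nt 1 by simp
          moreover have "\<sigma> (take k h) \<noteq> b"
          proof
            assume "\<sigma> (take k h) = b"
            then have "sig' s p \<sigma> a b (take k h) = a"
              using ab by (simp add: sig'_def map_sw_id)
            then have "h ! k = a" using hk k by simp
            with hkin t(3) show False by simp
          qed
          ultimately show ?thesis by (simp add: sig'_def)
        qed
        moreover have "sw a b (h ! k) = h ! k" using hkin t(3,4) by (auto simp: sw_def)
        ultimately show ?thesis using k ab by (simp add: take_map map_sw_id)
      next
        case 2
        then show ?thesis using t by (simp add: take_map map_sw_id)
      next
        case 3
        have "h ! k = sig' s p \<sigma> a b (take k h)" using hk k by blast
        also have "\<dots> = sw a b (\<sigma> (map (sw a b) (take k h)))"
          using yt[OF 3] by (simp add: sig'_def)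
        finally show ?thesis using k by (simp add: take_map)
      qed
    qed
    note fact = this
    have "consistent X s p \<sigma> (map (sw a b) h)" unfolding consistent_def
    proof (intro conjI allI impI)
      show "legal_hist X (map (sw a b) h)" by (rule legal)
      fix k assume k: "k < length (map (sw a b) h)" "turn s (take k (map (sw a b) h)) = p"
      then have "k < length h" "turn s (take k h) = p" by (simp_all add: turn_def)
      then show "map (sw a b) h ! k = \<sigma> (take k (map (sw a b) h))" by (rule fact)
    qed
    then show ?thesis using True by (simp add: sim_def)
  next
    case False
    have "h ! k = \<sigma> (take k h)" if k: "k < length h" "turn s (take k h) = p" for k
    proof -
      have ntk: "\<not> trig s p \<sigma> a b (take k h)"
      proof
        assume "trig s p \<sigma> a b (take k h)"
        then obtain j where j: "turn s (take j (take k h)) = p"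
          "a \<notin> set (take j (take k h))" "b \<notin> set (take j (take k h))"
          "take k h ! j = a" "\<sigma> (take j (take k h)) = b" and "j < length (take k h)" unfolding trig_def by blast
        then have "trig s p \<sigma> a b h"
        proof -
          have jk: "j < k" "j < length h" using \<open>j < length (take k h)\<close> by auto
          then have "take j (take k h) = take j h" "take k h ! j = h ! j" by (simp_all add: min_def)
          then show ?thesis unfolding trig_def using jk j by metis
        qed
        with False show False by simp
      qed
      show ?thesis
      proof (cases "a \<notin> set (take k h) \<and> b \<notin> set (take k h) \<and> \<sigma> (take k h) = b")
        case True
        then have "h ! k = a" using hk[OF k] by (simp add: sig'_def map_sw_id)
        then have "trig s p \<sigma> a b h" using True k unfolding trig_def by blast
        with False show ?thesis by simp
      next
        case F2: False
        then show ?thesis using hk[OF k] ntk unfolding sig'_def by auto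
      qed
    qed
    then show ?thesis using False lh unfolding consistent_def sim_def by auto
  qed
qed

lemma card_sw:
  assumes f: "finite f" and ab: "a \<in> f \<Longrightarrow> b \<in> f" and C: "a \<in> C \<or> b \<notin> C"
  shows "card (C \<inter> f) \<le> card (sw a b ` C \<inter> f)"
proof (cases "a \<in> f")
  case True
  with ab have bf: "b \<in> f" by blast
  have "sw a b ` (C \<inter> f) \<subseteq> sw a b ` C \<inter> f" using True bf by (auto simp: sw_def)
  then have "card (sw a b ` (C \<inter> f)) \<le> card (sw a b ` C \<inter> f)" using f by (intro card_mono) auto
  moreover have "card (sw a b ` (C \<inter> f)) = card (C \<inter> f)"
    by (rule card_image) (meson inj_sw inj_on_subset subset_UNIV)
  ultimately show ?thesis by simp
next
  case False
  have "C \<inter> f \<subseteq> sw a b ` C \<inter> f"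
  proof
    fix x assume x: "x \<in> C \<inter> f"
    have "x \<in> sw a b ` C"
    proof (cases "x = b")
      case True
      then have "a \<in> C" using C x by auto
      then show ?thesis using True by (metis image_eqI sw_a)
    next
      case xb: False
      have "x \<noteq> a" using x False by auto
      then have "sw a b x = x" using xb by (simp add: sw_def)
      then show ?thesis using x by (metis IntD1 image_eqI)
    qed
    then show "x \<in> sw a b ` C \<inter> f" using x by simp
  qed
  then show ?thesis using f by (intro card_mono) auto
qed

lemma avoider_set_map: "avoider_set s (map f h) = f ` avoider_set s h"
proof -
  have T: "turn s (take k (map f h)) = turn s (take k h)" for k by (simp add: turn_def)
  show ?thesis unfolding avoider_set_def T
  proof (intro set_eqI iffI)
    fix x assume "x \<in> {map f h ! k |k. k < length (map f h) \<and> turn s (take k h) = Avoider}"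
    then obtain k where k: "x = f (h ! k)" "k < length h" "turn s (take k h) = Avoider" by auto
    then show "x \<in> f ` {h ! k |k. k < length h \<and> turn s (take k h) = Avoider}" by blast
  next
    fix x assume "x \<in> f ` {h ! k |k. k < length h \<and> turn s (take k h) = Avoider}"
    then obtain k where k: "x = f (h ! k)" "k < length h" "turn s (take k h) = Avoider" by auto
    then show "x \<in> {map f h ! k |k. k < length (map f h) \<and> turn s (take k h) = Avoider}" by force
  qed
qed

lemma sw_image_X: "a \<in> X \<Longrightarrow> b \<in> X \<Longrightarrow> sw a b ` X = X"
  by (auto simp: sw_def image_iff)

theorem lemma1:
  fixes X :: "'a set" and F :: "('a set \<times> nat) set" and a b :: 'a
    and s p :: player and \<sigma> :: "'a list \<Rightarrow> 'a"
  assumes "finite X"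
    and "\<forall>(f, i) \<in> F. f \<subseteq> X"
    and "a \<in> X" and "b \<in> X" and "a \<noteq> b"
    and "prec (L F a) (L F b)"
    and "winning_strategy X F s p \<sigma>"
  shows "\<exists>\<sigma>'. winning_strategy X F s p \<sigma>' \<and> prefers X s p \<sigma>' a b"
proof -
  note fin = assms(1) and FX = assms(2) and aX = assms(3) and bX = assms(4) and ab = assms(5)
  have W1: "\<And>h. consistent X s p \<sigma> h \<Longrightarrow> set h \<noteq> X \<Longrightarrow> turn s h = p \<Longrightarrow> \<sigma> h \<in> X - set h"
   and W2: "\<And>h. consistent X s p \<sigma> h \<Longrightarrow> set h = X \<Longrightarrow> wins F s p h"
    using assms(7) unfolding winning_strategy_def by auto
  have fab: "b \<in> f" if "(f, i) \<in> F" "a \<in> f" for f i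
  proof -
    have "(f, i) \<in> L F a" using that by (simp add: L_def)
    then obtain g j where "(g, j) \<in> L F b" "g \<subseteq> f" using assms(6) unfolding prec_def by blast
    then show ?thesis by (auto simp: L_def)
  qed
  have swX: "sw a b ` X = X" using aX bX by (rule sw_image_X)
  have sw_in: "sw a b y \<in> X" if "y \<in> X" for y using swX that by blast
  define \<tau> where "\<tau> = sig' s p \<sigma> a b"
  have setsim: "set (sim s p \<sigma> a b h) = X \<longleftrightarrow> set h = X" for h
  proof -
    have "sw a b ` set h = X \<longleftrightarrow> set h = X"
    proof -
      have inv: "sw a b ` (sw a b ` Y) = Y" for Y by (simp add: image_comp comp_def)
      show ?thesis using inv[of "set h"] swX by auto
    qed
    then show ?thesis by (simp add: sim_def)
  qed
  have turnsim: "turn s (sim s p \<sigma> a b h) = turn s h" for h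
    by (simp add: sim_def turn_def)
  have A: "\<tau> h \<in> X - set h" if c: "consistent X s p \<tau> h" "set h \<noteq> X" "turn s h = p" for h
  proof -
    have cs: "consistent X s p \<sigma> (sim s p \<sigma> a b h)"
      using c(1) aX bX unfolding \<tau>_def by (rule sim_consistent)
    have g: "\<sigma> (sim s p \<sigma> a b h) \<in> X - set (sim s p \<sigma> a b h)"
      using W1[OF cs] setsim turnsim c by auto
    show ?thesis
    proof (cases "trig s p \<sigma> a b h")
      case True
      then have "\<tau> h = sw a b (\<sigma> (map (sw a b) h))" by (simp add: \<tau>_def sig'_def)
      moreover have "\<sigma> (map (sw a b) h) \<in> X - sw a b ` set h" using g True by (simp add: sim_def)
      ultimately show ?thesis using sw_in by (auto simp: image_iff)
    next
      case False
      show ?thesis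
      proof (cases "a \<notin> set h \<and> b \<notin> set h \<and> \<sigma> h = b")
        case True
        then have "\<tau> h = a" using False by (simp add: \<tau>_def sig'_def map_sw_id)
        then show ?thesis using True aX by simp
      next
        case F2: False
        then have "\<tau> h = \<sigma> h" using False unfolding \<tau>_def sig'_def by auto
        then show ?thesis using g False by (simp add: sim_def)
      qed
    qed
  qed
  have B: "wins F s p h" if c: "consistent X s p \<tau> h" "set h = X" for h
  proof -
    have cs: "consistent X s p \<sigma> (sim s p \<sigma> a b h)"
      using c(1) aX bX unfolding \<tau>_def by (rule sim_consistent)
    have g: "wins F s p (sim s p \<sigma> a b h)"
      using W2[OF cs] setsim c by auto
    show ?thesis
    proof (cases "trig s p \<sigma> a b h")
      case False
      then show ?thesis using g by (simp add: sim_def)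
    next
      case True
      have dist: "distinct h" using c(1) by (simp add: consistent_def legal_hist_def)
      from trig_take[OF True dist] obtain t where t: "t < length h" "turn s (take t h) = p" "h ! t = a"
        by metis
      define A where "A = avoider_set s h"
      have gA: "wins F s p (map (sw a b) h)" using g True by (simp add: sim_def)
      have gA': "avoider_set s (map (sw a b) h) = sw a b ` A"
        by (simp add: A_def avoider_set_map)
      have fin_f: "finite f" if "(f, i) \<in> F" for f i
      proof -
        have "f \<subseteq> X" using that FX by blast
        then show ?thesis using fin by (rule finite_subset)
      qed
      show ?thesis
      proof (cases p)
        case Avoider
        have aA: "a \<in> A" using t Avoider unfolding A_def avoider_set_def by auto
        have "avoider_wins F (sw a b ` A)" using gA gA' Avoider by (simp add: wins_def)
        then have H: "card (sw a b ` A \<inter> f) < i" if "(f, i) \<in> F" for f i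
          using that unfolding avoider_wins_def by fastforce
        have "avoider_wins F A"
          unfolding avoider_wins_def
        proof
          assume "\<exists>(f, i)\<in>F. i \<le> card (A \<inter> f)"
          then obtain f i where fi: "(f, i) \<in> F" "i \<le> card (A \<inter> f)" by blast
          have "card (A \<inter> f) \<le> card (sw a b ` A \<inter> f)"
            using card_sw[OF fin_f[OF fi(1)] fab[OF fi(1)]] aA by blast
          moreover have "card (sw a b ` A \<inter> f) < i" using H fi(1) by blast
          ultimately show False using fi(2) by simp
        qed
        then show ?thesis using Avoider by (simp add: wins_def A_def)
      next
        case Enforcer
        have aA: "a \<notin> A"
        proof
          assume "a \<in> A"
          then obtain k where k: "k < length h" "turn s (take k h) = Avoider" "h ! k = a"
            unfolding A_def avoider_set_def by auto
          then have "k = t" using t dist by (metis nth_eq_iff_index_eq)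
          then show False using k t Enforcer by simp
        qed
        have bA: "b \<notin> sw a b ` A" using aA by (metis image_iff sw_sw sw_a)
        have "\<not> avoider_wins F (sw a b ` A)" using gA gA' Enforcer by (simp add: wins_def)
        then obtain f i where fi: "(f, i) \<in> F" "i \<le> card (sw a b ` A \<inter> f)"
          unfolding avoider_wins_def by auto
        have "card (sw a b ` A \<inter> f) \<le> card (sw a b ` (sw a b ` A) \<inter> f)"
          using card_sw[OF fin_f[OF fi(1)] fab[OF fi(1)]] bA by blast
        moreover have "sw a b ` (sw a b ` A) = A" by (simp add: image_comp comp_def)
        ultimately have "\<not> avoider_wins F A" using fi unfolding avoider_wins_def by fastforce
        then show ?thesis using Enforcer by (simp add: wins_def A_def)
      qed
    qed
  qed
  have P: "prefers X s p \<tau> a b"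
    unfolding prefers_def
  proof (intro allI impI)
    fix h assume h: "consistent X s p \<tau> h \<and> turn s h = p \<and> a \<notin> set h \<and> b \<notin> set h"
    have nt: "\<not> trig s p \<sigma> a b h"
    proof
      assume "trig s p \<sigma> a b h"
      then obtain k where "k < length h" "h ! k = a" unfolding trig_def by blast
      then show False using h by (metis nth_mem)
    qed
    show "\<tau> h \<noteq> b"
    proof (cases "\<sigma> h = b")
      case True
      then have "\<tau> h = a" using h by (simp add: \<tau>_def sig'_def map_sw_id)
      then show ?thesis using ab by simp
    next
      case False
      then show ?thesis using nt by (simp add: \<tau>_def sig'_def)
    qed
  qed
  have "winning_strategy X F s p \<tau>" unfolding winning_strategy_def using A B by blast
  with P show ?thesis by blast
qed

end
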